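(* Let $k\ge2$ and $r\ge0$ be integers and $\alpha>k+r$ real. Then $$\sum_{n=1}^\infty\frac{H_{n+\alpha}}{\binom{n+k+r}{k}}=k\sum_{j=1}^{k-1}(-1)^{j+1}\binom{k-1}{j}\Bigg\{H_{\alpha-r-1}^2+H_{\alpha-r-1}^{(2)}-H_{\alpha-r-1-j}^2-H_{\alpha-r-1-j}^{(2)}-(r+1+j-\alpha)\sum_{i=1}^{r+1+j}\frac{H_{\alpha+i-r-1-j}}{i(\alpha+i-r-1-j)}+(r+1-\alpha)\sum_{i=1}^{r+1}\frac{H_{\alpha+i-r-1}}{i(\alpha+i-r-1)}\Bigg\},$$ $$\sum_{n=1}^\infty\frac{H_{n+\alpha}^{(2)}}{\binom{n+k+r}{k}}=k\sum_{j=1}^{k-1}(-1)^{j+1}\binom{k-1}{j}\Bigg\{(r+1-\alpha)\sum_{i=1}^{r+1}\frac{H^{(2)}_{\alpha+i-r-1}}{i(\alpha+i-r-1)}-(r+1+j-\alpha)\sum_{i=1}^{r+1+j}\frac{H^{(2)}_{\alpha+i-r-1-j}}{i(\alpha+i-r-1-j)}-\sum_{i=1}^{j}\frac{H_{\alpha+i-r-1-j}}{(\alpha+i-r-1-j)^2}$$ $$+2H^{(3)}_{\alpha-r-1}+H_{\alpha-r-1-j}\zeta(2)+2H_{\alpha-r-1}H^{(2)}_{\alpha-r-1}-2H^{(3)}_{\alpha-r-1-j}-H_{\alpha-r-1}\zeta(2)-2H_{\alpha-r-1-j}H^{(2)}_{\alpha-r-1-j}\Bigg\},$$ $$\sum_{n=1}^\infty\frac{H_{n+\alpha}^2}{\binom{n+k+r}{k}}=k\sum_{j=1}^{k-1}(-1)^{j+1}\binom{k-1}{j}\Bigg\{H^3_{\alpha-r-1}+H_{\alpha-r-1}H^{(2)}_{\alpha-r-1}+H_{\alpha-r-1}\zeta(2)-H^3_{\alpha-r-1-j}-H_{\alpha-r-1-j}H^{(2)}_{\alpha-r-1-j}-H_{\alpha-r-1-j}\zeta(2)$$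 $$+(r+1-\alpha)\sum_{i=1}^{r+1}\frac{H^2_{\alpha+i-r-1}}{i(\alpha+i-r-1)}+\sum_{i=1}^{j}\frac{H_{\alpha+i-r-1-j}}{(\alpha+i-r-1-j)^2}-(r+1+j-\alpha)\sum_{i=1}^{r+1+j}\frac{H^2_{\alpha+i-r-1-j}}{i(\alpha+i-r-1-j)}\Bigg\}.$$
   Context: Shifted harmonic numbers: for a real $\alpha$ that is not a negative integer, $H_\alpha := \sum_{k=1}^\infty\left(\frac1k-\frac1{k+\alpha}\right)$ and, for integers $m\ge 2$, $H_\alpha^{(m)} := \sum_{k=1}^\infty\left(\frac1{k^m}-\frac1{(k+\alpha)^m}\right)=\zeta(m)-\zeta(m,\alpha+1)$, where $\zeta$ is the Riemann zeta function and $\zeta(s,\alpha+1)=\sum_{n=1}^\infty (n+\alpha)^{-s}$ is the Hurwitz zeta function. Powers such as $H_\alpha^2$ mean $(H_\alpha)^2$. Empty sums are $0$. *)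

theory Defs
  imports "HOL-Analysis.Analysis"
begin

definition sH :: "real \<Rightarrow> real" where
  "sH a = (\<Sum>k. 1 / real (Suc k) - 1 / (real (Suc k) + a))"

definition sHm :: "nat \<Rightarrow> real \<Rightarrow> real" where
  "sHm m a = (\<Sum>k. 1 / real (Suc k) ^ m - 1 / (real (Suc k) + a) ^ m)"

definition zeta2 :: real where
  "zeta2 = (\<Sum>n. 1 / real (Suc n) ^ 2)"

end

theory Submission
  imports Defs "HOL-Real_Asymp.Real_Asymp"
begin

lemma summable_inv_sq: "summable (\<lambda>k. 1 / real (Suc k) ^ 2)"
proof -
  have "summable (\<lambda>n. inverse (real n ^ 2))" by (rule inverse_power_summable) simp
  hence "summable (\<lambda>n. inverse (real (Suc n) ^ 2))" by (subst summable_Suc_iff)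
  thus ?thesis by (simp add: divide_inverse)
qed

lemma zeta2_sums: "(\<lambda>k. 1 / real (Suc k) ^ 2) sums zeta2"
  unfolding zeta2_def using summable_inv_sq by (rule summable_sums)

lemma sH_term_nonneg: "y \<ge> 0 \<Longrightarrow> 0 \<le> 1 / real (Suc k) - 1 / (real (Suc k) + y)"
  by (simp add: field_simps)

lemma sH_term_summable:
  assumes "y \<ge> 0" shows "summable (\<lambda>k. 1 / real (Suc k) - 1 / (real (Suc k) + y))"
proof (rule summable_comparison_test'[where g = "\<lambda>k. y * (1 / real (Suc k) ^ 2)"])
  show "summable (\<lambda>k. y * (1 / real (Suc k) ^ 2))" using summable_inv_sq by (rule summable_mult)
  fix n :: nat
  have "1 / real (Suc n) - 1 / (real (Suc n) + y) = y / (real (Suc n) * (real (Suc n) + y))"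
    using assms by (simp add: field_simps)
  also have "\<dots> \<le> y / (real (Suc n) * real (Suc n))"
    using assms by (intro divide_left_mono mult_left_mono mult_pos_pos) auto
  also have "\<dots> = y * (1 / real (Suc n) ^ 2)" by (simp add: power2_eq_square)
  finally show "norm (1 / real (Suc n) - 1 / (real (Suc n) + y)) \<le> y * (1 / real (Suc n) ^ 2)"
    using sH_term_nonneg[OF assms, of n] by simp
qed

lemma sHm_term_nonneg: "y \<ge> 0 \<Longrightarrow> 0 \<le> 1 / real (Suc k) ^ m - 1 / (real (Suc k) + y) ^ m"
  by (simp add: field_simps power_mono divide_le_eq_1 frac_le)

lemma sHm_term_le: "y \<ge> 0 \<Longrightarrow> m \<ge> 2 \<Longrightarrow> 1 / real (Suc k) ^ m - 1 / (real (Suc k) + y) ^ m \<le> 1 / real (Suc k) ^ 2"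
proof -
  assume y: "y \<ge> 0" and m: "m \<ge> 2"
  have "1 / real (Suc k) ^ m \<le> 1 / real (Suc k) ^ 2"
    using m by (intro divide_left_mono power_increasing) auto
  moreover have "0 \<le> 1 / (real (Suc k) + y) ^ m" using y by simp
  ultimately show ?thesis by linarith
qed

lemma sHm_term_summable:
  assumes "y \<ge> 0" "m \<ge> 2" shows "summable (\<lambda>k. 1 / real (Suc k) ^ m - 1 / (real (Suc k) + y) ^ m)"
  by (rule summable_comparison_test'[OF summable_inv_sq])
     (use sHm_term_nonneg[OF assms(1)] sHm_term_le[OF assms] in auto)

lemma sH_sums: "y \<ge> 0 \<Longrightarrow> (\<lambda>k. 1 / real (Suc k) - 1 / (real (Suc k) + y)) sums sH y"
  unfolding sH_def by (rule summable_sums, rule sH_term_summable)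

lemma sHm_sums: "y \<ge> 0 \<Longrightarrow> m \<ge> 2 \<Longrightarrow> (\<lambda>k. 1 / real (Suc k) ^ m - 1 / (real (Suc k) + y) ^ m) sums sHm m y"
  unfolding sHm_def by (rule summable_sums, rule sHm_term_summable)

lemma sH_rec:
  assumes "x \<ge> 1" shows "sH x = sH (x - 1) + 1 / x"
proof -
  have "(\<lambda>k. (1 / real (Suc k) - 1 / (real (Suc k) + x)) - (1 / real (Suc k) - 1 / (real (Suc k) + (x - 1))))
        sums (sH x - sH (x - 1))"
    using assms by (intro sums_diff sH_sums) auto
  moreover have "(\<lambda>k. 1 / (real k + x) - 1 / (real (Suc k) + x)) sums (1 / (real 0 + x) - 0)"
    by (rule telescope_sums') real_asymp
  moreover have "(\<lambda>k. (1 / real (Suc k) - 1 / (real (Suc k) + x)) - (1 / real (Suc k) - 1 / (real (Suc k) + (x - 1))))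
     = (\<lambda>k. 1 / (real k + x) - 1 / (real (Suc k) + x))"
    by (auto simp: algebra_simps)
  ultimately have "sH x - sH (x - 1) = 1 / x" using sums_unique2 by fastforce
  thus ?thesis by simp
qed

lemma sHm_rec:
  assumes "x \<ge> 1" "m \<ge> 2" shows "sHm m x = sHm m (x - 1) + 1 / x ^ m"
proof -
  have "(\<lambda>k. (1 / real (Suc k) ^ m - 1 / (real (Suc k) + x) ^ m) - (1 / real (Suc k) ^ m - 1 / (real (Suc k) + (x - 1)) ^ m))
        sums (sHm m x - sHm m (x - 1))"
    using assms by (intro sums_diff sHm_sums) auto
  moreover have "(\<lambda>k. 1 / (real k + x) ^ m - 1 / (real (Suc k) + x) ^ m) sums (1 / (real 0 + x) ^ m - 0)"
  proof (rule telescope_sums')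
    have "(\<lambda>k. 1 / (real k + x)) \<longlonglongrightarrow> 0" by real_asymp
    hence "(\<lambda>k. (1 / (real k + x)) ^ m) \<longlonglongrightarrow> 0 ^ m" by (intro tendsto_intros)
    thus "(\<lambda>k. 1 / (real k + x) ^ m) \<longlonglongrightarrow> 0" using assms by (simp add: power_one_over power_0_left)
  qed
  moreover have "(\<lambda>k. (1 / real (Suc k) ^ m - 1 / (real (Suc k) + x) ^ m) - (1 / real (Suc k) ^ m - 1 / (real (Suc k) + (x - 1)) ^ m))
     = (\<lambda>k. 1 / (real k + x) ^ m - 1 / (real (Suc k) + x) ^ m)"
    by (auto simp: algebra_simps)
  ultimately have "sHm m x - sHm m (x - 1) = 1 / x ^ m" using sums_unique2 by fastforce
  thus ?thesis by simp
qed

lemma sH_0: "sH 0 = 0" unfolding sH_def by simp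
lemma sHm_0: "sHm m 0 = 0" unfolding sHm_def by simp

lemma sH_nonneg: "y \<ge> 0 \<Longrightarrow> 0 \<le> sH y"
  unfolding sH_def by (intro suminf_nonneg sH_term_summable sH_term_nonneg)

lemma sHm_nonneg: "y \<ge> 0 \<Longrightarrow> m \<ge> 2 \<Longrightarrow> 0 \<le> sHm m y"
  unfolding sHm_def by (intro suminf_nonneg sHm_term_summable sHm_term_nonneg)

lemma sHm_le_zeta2: "y \<ge> 0 \<Longrightarrow> m \<ge> 2 \<Longrightarrow> sHm m y \<le> zeta2"
  unfolding sHm_def zeta2_def
  by (intro suminf_le sHm_term_summable summable_inv_sq sHm_term_le)

lemma sH_mono: "0 \<le> x \<Longrightarrow> x \<le> y \<Longrightarrow> sH x \<le> sH y"
  unfolding sH_def by (intro suminf_le sH_term_summable allI diff_left_mono divide_left_mono) auto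

lemma sHm2_mono: "0 \<le> x \<Longrightarrow> x \<le> y \<Longrightarrow> sHm 2 x \<le> sHm 2 y"
  unfolding sHm_def
  by (intro suminf_le sHm_term_summable allI diff_left_mono divide_left_mono power_mono) auto

lemma sH_nat: "sH (real n) = harm n"
proof (induction n)
  case 0 thus ?case by (simp add: sH_0 harm_def)
next
  case (Suc n)
  have "sH (real (Suc n)) = sH (real (Suc n) - 1) + 1 / real (Suc n)" by (rule sH_rec) simp
  thus ?case using Suc by (simp add: harm_Suc divide_inverse)
qed

lemma harm_le_ln: "n \<ge> 1 \<Longrightarrow> harm n \<le> 1 + ln (real n)"
proof (induction n rule: nat_induct_at_least)
  case base thus ?case by (simp add: harm_def)
next
  case (Suc n)
  have "ln (real n / real (Suc n)) \<le> real n / real (Suc n) - 1"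
    using Suc.hyps by (intro ln_le_minus_one) auto
  moreover have "ln (real n / real (Suc n)) = ln (real n) - ln (real (Suc n))"
    using Suc.hyps by (simp add: ln_div)
  moreover have "real n / real (Suc n) - 1 = - inverse (real (Suc n))" by (simp add: field_simps)
  ultimately show ?case using Suc.IH by (simp add: harm_Suc)
qed

lemma sH_le_ln: assumes "y \<ge> 0" shows "sH y \<le> 1 + ln (y + 1)"
proof -
  define n where "n = nat \<lceil>y\<rceil>"
  have n1: "y \<le> real n" "real n < y + 1" unfolding n_def using assms by linarith+
  have "sH y \<le> harm n" using sH_mono[OF assms n1(1)] by (simp add: sH_nat)
  moreover have "harm n \<le> 1 + ln (y + 1)"
  proof (cases "n = 0")
    case True thus ?thesis using assms by (simp add: harm_def)
  next
    case False
    hence "harm n \<le> 1 + ln (real n)" by (intro harm_le_ln) auto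
    also have "ln (real n) \<le> ln (y + 1)" using False n1 by (subst ln_le_cancel_iff) auto
    finally show ?thesis by simp
  qed
  ultimately show ?thesis by linarith
qed

lemma ln_le_sqrt4: assumes "z > 0" shows "ln z \<le> 4 * sqrt (sqrt z)"
proof -
  have "ln z = 4 * ln (sqrt (sqrt z))" using assms by (simp add: ln_sqrt)
  also have "ln (sqrt (sqrt z)) \<le> sqrt (sqrt z) - 1" using assms by (intro ln_le_minus_one) auto
  finally show ?thesis by simp
qed

lemma sH_bound1: assumes "y \<ge> 1" shows "sH y \<le> 7 * sqrt (sqrt y)"
proof -
  have a: "sH y \<le> 1 + 4 * sqrt (sqrt (y + 1))"
    using sH_le_ln[of y] ln_le_sqrt4[of "y + 1"] assms by simp
  have "sqrt (sqrt (y + 1)) \<le> sqrt (sqrt (2 * y))" using assms by simp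
  also have "sqrt (sqrt (2 * y)) = sqrt (sqrt 2) * sqrt (sqrt y)" by (simp add: real_sqrt_mult)
  finally have b: "sqrt (sqrt (y + 1)) \<le> sqrt (sqrt 2) * sqrt (sqrt y)" .
  have c: "sqrt (sqrt 2) \<le> (3 / 2 :: real)"
  proof -
    have "sqrt (2::real) \<le> 9/4" by (rule real_le_lsqrt) (auto simp: power2_eq_square)
    hence "sqrt (sqrt (2::real)) \<le> sqrt (9/4)" by simp
    also have "sqrt (9/4::real) = 3/2" by (rule real_sqrt_unique) (auto simp: power2_eq_square)
    finally show ?thesis .
  qed
  have d: "1 \<le> sqrt (sqrt y)" using assms by simp
  have "sqrt (sqrt 2) * sqrt (sqrt y) \<le> 3 / 2 * sqrt (sqrt y)"
    using c d by (intro mult_right_mono) auto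
  thus ?thesis using a b d by linarith
qed

lemma sH_bound: assumes "y \<ge> 1" shows "\<bar>sH y\<bar> \<le> 7 * sqrt y" "\<bar>sH y ^ 2\<bar> \<le> 49 * sqrt y"
proof -
  have 0: "0 \<le> sH y" using assms by (intro sH_nonneg) auto
  have w1: "1 \<le> sqrt (sqrt y)" using assms by simp
  have ww: "sqrt (sqrt y) * sqrt (sqrt y) = sqrt y" using assms by simp
  have 1: "sqrt (sqrt y) \<le> sqrt y" using w1 ww mult_right_mono[OF w1, of "sqrt (sqrt y)"] by simp
  have ab: "\<bar>sH y\<bar> = sH y" using 0 by simp
  show "\<bar>sH y\<bar> \<le> 7 * sqrt y" using sH_bound1[OF assms] ab 1 by linarith
  have "sH y ^ 2 \<le> (7 * sqrt (sqrt y)) ^ 2" using sH_bound1[OF assms] 0 by (intro power_mono) auto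
  also have "\<dots> = 49 * sqrt y" using ww by (simp add: power2_eq_square)
  finally show "\<bar>sH y ^ 2\<bar> \<le> 49 * sqrt y" by simp
qed

lemma sHm2_bound: assumes "y \<ge> 1" shows "\<bar>sHm 2 y\<bar> \<le> zeta2 * sqrt y"
proof -
  have a: "0 \<le> sHm 2 y" "sHm 2 y \<le> zeta2" using assms by (auto intro: sHm_nonneg sHm_le_zeta2)
  have "zeta2 * 1 \<le> zeta2 * sqrt y" using assms a by (intro mult_left_mono) auto
  thus ?thesis using a by linarith
qed

definition UU :: "(real \<Rightarrow> real) \<Rightarrow> real \<Rightarrow> real" where
  "UU f x = (\<Sum>m. f (real (Suc m) + x) * (1 / real (Suc m) - 1 / (real (Suc m) + x)))"

lemma sqrt_term_summable:
  assumes "x \<ge> 0"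
  shows "summable (\<lambda>n. sqrt (real (Suc n) + x) * (1 / real (Suc n) - 1 / (real (Suc n) + x)))"
proof -
  have s: "summable (\<lambda>n. real (Suc n) powr (- (3/2)))"
    using summable_real_powr_iff[of "-3/2"] by (subst summable_Suc_iff) simp
  show ?thesis
  proof (rule summable_comparison_test'[where g = "\<lambda>n. x * real (Suc n) powr (- (3/2))"])
    show "summable (\<lambda>n. x * real (Suc n) powr (- (3/2)))" using s by (rule summable_mult)
    fix n :: nat
    define m where "m = real (Suc n)"
    have m: "m \<ge> 1" unfolding m_def by simp
    have q: "sqrt (m + x) * sqrt (m + x) = m + x" using m assms by simp
    have sp: "sqrt (m + x) > 0" using m assms by simp
    have nn: "0 \<le> sqrt (m + x) * (1 / m - 1 / (m + x))" using m assms by (simp add: field_simps)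
    have "sqrt (m + x) * (1 / m - 1 / (m + x)) = x / (m * sqrt (m + x))"
    proof -
      define s where "s = sqrt (m + x)"
      have s: "s > 0" "m + x = s * s" unfolding s_def using sp q by auto
      have "1 / m - 1 / (m + x) = x / (m * (m + x))" using m s by (simp add: field_simps)
      hence "s * (1 / m - 1 / (m + x)) = s * (x / (m * (s * s)))" using s by simp
      also have "\<dots> = x / (m * s)" using s m by (simp add: field_simps)
      finally show ?thesis unfolding s_def .
    qed
    also have "\<dots> \<le> x / (m * sqrt m)"
      using m assms by (rule_tac divide_left_mono) simp_all
    also have "m * sqrt m = m powr (3/2)"
    proof -
      have "m powr (3/2) = m powr (1 + 1/2)" by simp
      also have "\<dots> = m powr 1 * m powr (1/2)" using m by (subst powr_add) auto
      also have "\<dots> = m * sqrt m" using m by (simp add: powr_half_sqrt)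
      finally show ?thesis by simp
    qed
    also have "x / m powr (3/2) = x * m powr (- (3/2))" by (subst powr_minus_divide) simp
    finally have "sqrt (m + x) * (1 / m - 1 / (m + x)) \<le> x * m powr (- (3/2))" .
    hence "norm (sqrt (m + x) * (1 / m - 1 / (m + x))) \<le> x * m powr (- (3/2))"
      using nn by (simp only: real_norm_def abs_of_nonneg)
    thus "norm (sqrt (real (Suc n) + x) * (1 / real (Suc n) - 1 / (real (Suc n) + x)))
       \<le> x * real (Suc n) powr (- (3/2))" unfolding m_def .
  qed
qed

lemma U_summable:
  assumes b: "\<And>y. y \<ge> 1 \<Longrightarrow> \<bar>f y\<bar> \<le> C * sqrt y" and x: "x \<ge> 0"
  shows "summable (\<lambda>n. f (real (Suc n) + x) * (1 / real (Suc n) - 1 / (real (Suc n) + x)))"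
proof (rule summable_comparison_test'[where g = "\<lambda>n. C * (sqrt (real (Suc n) + x) * (1 / real (Suc n) - 1 / (real (Suc n) + x)))"])
  show "summable (\<lambda>n. C * (sqrt (real (Suc n) + x) * (1 / real (Suc n) - 1 / (real (Suc n) + x))))"
    by (intro summable_mult sqrt_term_summable x)
  fix n :: nat
  have t: "0 \<le> 1 / real (Suc n) - 1 / (real (Suc n) + x)" using x by (rule sH_term_nonneg)
  have "\<bar>f (real (Suc n) + x)\<bar> \<le> C * sqrt (real (Suc n) + x)" using x by (intro b) simp
  hence "\<bar>f (real (Suc n) + x)\<bar> * (1 / real (Suc n) - 1 / (real (Suc n) + x))
        \<le> C * sqrt (real (Suc n) + x) * (1 / real (Suc n) - 1 / (real (Suc n) + x))"
    using t by (rule mult_right_mono)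
  thus "norm (f (real (Suc n) + x) * (1 / real (Suc n) - 1 / (real (Suc n) + x)))
       \<le> C * (sqrt (real (Suc n) + x) * (1 / real (Suc n) - 1 / (real (Suc n) + x)))"
    using t by (simp add: abs_mult mult.assoc)
qed

lemma U_sums:
  assumes "\<And>y. y \<ge> 1 \<Longrightarrow> \<bar>f y\<bar> \<le> C * sqrt y" "x \<ge> 0"
  shows "(\<lambda>n. f (real (Suc n) + x) * (1 / real (Suc n) - 1 / (real (Suc n) + x))) sums UU f x"
  unfolding UU_def by (rule summable_sums, rule U_summable[OF assms])

lemma f_over_lim:
  assumes b: "\<And>y. y \<ge> 1 \<Longrightarrow> \<bar>f y\<bar> \<le> C * sqrt y" and x: "x \<ge> 1"
  shows "(\<lambda>m. f (real m + x) / (real m + x)) \<longlonglongrightarrow> 0"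
proof (rule Lim_null_comparison)
  show "(\<lambda>m. C / sqrt (real m + x)) \<longlonglongrightarrow> 0" by real_asymp
  show "\<forall>\<^sub>F m in sequentially. norm (f (real m + x) / (real m + x)) \<le> C / sqrt (real m + x)"
  proof (intro always_eventually allI)
    fix m :: nat
    define y where "y = real m + x"
    have y: "y \<ge> 1" unfolding y_def using x by simp
    have "norm (f y / y) = \<bar>f y\<bar> / y" using y by simp
    also have "\<dots> \<le> C * sqrt y / y" using b[OF y] y by (intro divide_right_mono) auto
    also have "C * sqrt y / y = C / sqrt y"
    proof -
      have "sqrt y * sqrt y = y" using y by simp
      thus ?thesis using y by (simp add: field_simps)
    qed
    finally show "norm (f (real m + x) / (real m + x)) \<le> C / sqrt (real m + x)" unfolding y_def .
  qed
qed

lemma U_diff: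
  assumes b: "\<And>y. y \<ge> 1 \<Longrightarrow> \<bar>f y\<bar> \<le> C * sqrt y" and x: "x \<ge> 1"
    and d: "(\<lambda>n. (f (real (Suc n) + x) - f (real (Suc n) + x - 1)) / real (Suc n)) sums D"
  shows "UU f x - UU f (x - 1) = D + f x / x"
proof -
  let ?g = "\<lambda>m. f (real m + x) / (real m + x)"
  have t: "(\<lambda>m. ?g m - ?g (Suc m)) sums (?g 0 - 0)"
    by (rule telescope_sums') (rule f_over_lim[OF b x])
  have s: "(\<lambda>n. f (real (Suc n) + x) * (1 / real (Suc n) - 1 / (real (Suc n) + x))
      - f (real (Suc n) + (x - 1)) * (1 / real (Suc n) - 1 / (real (Suc n) + (x - 1))))
      sums (UU f x - UU f (x - 1))"
    using x by (intro sums_diff U_sums[OF b]) auto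
  have e: "(\<lambda>n. f (real (Suc n) + x) * (1 / real (Suc n) - 1 / (real (Suc n) + x))
      - f (real (Suc n) + (x - 1)) * (1 / real (Suc n) - 1 / (real (Suc n) + (x - 1))))
      = (\<lambda>n. (f (real (Suc n) + x) - f (real (Suc n) + x - 1)) / real (Suc n) + (?g n - ?g (Suc n)))"
  proof
    fix n :: nat
    have 1: "real (Suc n) + (x - 1) = real (Suc n) + x - 1" by simp
    have 2: "real n + x = real (Suc n) + x - 1" by simp
    have gen: "\<And>A B m p q::real. A * (1 / m - 1 / p) - B * (1 / m - 1 / q) = (A - B) / m + (B / q - A / p)"
      by (simp add: divide_inverse algebra_simps)
    show "f (real (Suc n) + x) * (1 / real (Suc n) - 1 / (real (Suc n) + x))
      - f (real (Suc n) + (x - 1)) * (1 / real (Suc n) - 1 / (real (Suc n) + (x - 1)))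
      = (f (real (Suc n) + x) - f (real (Suc n) + x - 1)) / real (Suc n) + (?g n - ?g (Suc n))"
      unfolding 1 2 gen by simp
  qed
  have "(\<lambda>n. (f (real (Suc n) + x) - f (real (Suc n) + x - 1)) / real (Suc n) + (?g n - ?g (Suc n)))
      sums (D + (?g 0 - 0))" by (rule sums_add[OF d t])
  moreover from s e have "(\<lambda>n. (f (real (Suc n) + x) - f (real (Suc n) + x - 1)) / real (Suc n) + (?g n - ?g (Suc n)))
      sums (UU f x - UU f (x - 1))" by simp
  ultimately have "UU f x - UU f (x - 1) = D + (?g 0 - 0)" by (rule sums_unique2[symmetric])
  thus ?thesis by simp
qed

lemma sH_bnd: "y \<ge> 1 \<Longrightarrow> \<bar>sH y\<bar> \<le> 7 * sqrt y" using sH_bound(1) .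
lemma sHsq_bnd: "y \<ge> 1 \<Longrightarrow> \<bar>(\<lambda>y. sH y ^ 2) y\<bar> \<le> 49 * sqrt y" using sH_bound(2) by simp

lemma aux_frac: "(m::real) > 0 \<Longrightarrow> m + x > 0 \<Longrightarrow> x > 0 \<Longrightarrow> (1 / m - 1 / (m + x)) / x = 1 / (m * (m + x))"
proof -
  assume a: "m > 0" "m + x > 0" "x > 0"
  hence "1 / m - 1 / (m + x) = x / (m * (m + x))" by (simp add: field_simps)
  thus ?thesis using a by simp
qed

lemma sum_inv_prod:
  assumes "x > 0" shows "(\<lambda>n. 1 / (real (Suc n) * (real (Suc n) + x))) sums (sH x / x)"
proof -
  have "(\<lambda>n. (1 / real (Suc n) - 1 / (real (Suc n) + x)) / x) sums (sH x / x)"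
    using assms by (intro sums_divide sH_sums) auto
  moreover have "(\<lambda>n. (1 / real (Suc n) - 1 / (real (Suc n) + x)) / x) = (\<lambda>n. 1 / (real (Suc n) * (real (Suc n) + x)))"
  proof
    fix n
    have "real (Suc n) > 0" "real (Suc n) + x > 0" using assms by auto
    thus "(1 / real (Suc n) - 1 / (real (Suc n) + x)) / x = 1 / (real (Suc n) * (real (Suc n) + x))"
      using assms by (rule aux_frac)
  qed
  ultimately show ?thesis by simp
qed

lemma DH: assumes "x \<ge> 1" shows "UU sH x - UU sH (x - 1) = 2 * sH x / x"
proof -
  have "(\<lambda>n. (sH (real (Suc n) + x) - sH (real (Suc n) + x - 1)) / real (Suc n)) sums (sH x / x)"
  proof -
    have "(\<lambda>n. (sH (real (Suc n) + x) - sH (real (Suc n) + x - 1)) / real (Suc n))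
        = (\<lambda>n. 1 / (real (Suc n) * (real (Suc n) + x)))"
    proof
      fix n
      have "sH (real (Suc n) + x) = sH (real (Suc n) + x - 1) + 1 / (real (Suc n) + x)"
        using assms by (intro sH_rec) simp
      thus "(sH (real (Suc n) + x) - sH (real (Suc n) + x - 1)) / real (Suc n) = 1 / (real (Suc n) * (real (Suc n) + x))"
        by simp
    qed
    thus ?thesis using sum_inv_prod[of x] assms by simp
  qed
  from U_diff[OF sH_bnd assms this] show ?thesis by simp
qed

definition Phi :: "real \<Rightarrow> real" where "Phi x = sH x ^ 2 + sHm 2 x"

lemma PhiD: assumes "x \<ge> 1" shows "Phi x - Phi (x - 1) = 2 * sH x / x"
proof -
  have a: "sH (x - 1) = sH x - 1 / x" using sH_rec[OF assms] by simp
  have b: "sHm 2 (x - 1) = sHm 2 x - 1 / x ^ 2" using sHm_rec[OF assms, of 2] by simp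
  show ?thesis unfolding Phi_def a b using assms by (simp add: field_simps power2_eq_square)
qed

lemma UU_sH_0: "UU sH 0 = 0" unfolding UU_def by simp
lemma Phi_0: "Phi 0 = 0" unfolding Phi_def by (simp add: sH_0 sHm_0)

lemma Dp: "x \<ge> 1 \<Longrightarrow> UU sH x - Phi x = UU sH (x - 1) - Phi (x - 1)"
  using DH PhiD by fastforce

lemma Dnat: "UU sH (real n) = Phi (real n)"
proof (induction n)
  case 0 thus ?case by (simp add: UU_sH_0 Phi_0)
next
  case (Suc n)
  have "UU sH (real (Suc n)) - Phi (real (Suc n)) = UU sH (real (Suc n) - 1) - Phi (real (Suc n) - 1)"
    by (rule Dp) simp
  thus ?case using Suc by simp
qed

lemma Dshift: "x \<ge> 0 \<Longrightarrow> UU sH (x + real n) - Phi (x + real n) = UU sH x - Phi x"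
proof (induction n)
  case 0 thus ?case by simp
next
  case (Suc n)
  have "UU sH (x + real (Suc n)) - Phi (x + real (Suc n)) = UU sH (x + real (Suc n) - 1) - Phi (x + real (Suc n) - 1)"
    using Suc.prems by (intro Dp) simp
  thus ?case using Suc by (simp add: add.assoc)
qed

lemma U_mono: assumes "0 \<le> x" "x \<le> y" shows "UU sH x \<le> UU sH y"
  unfolding UU_def
proof (intro suminf_le allI U_summable[OF sH_bnd])
  fix n
  show "sH (real (Suc n) + x) * (1 / real (Suc n) - 1 / (real (Suc n) + x))
    \<le> sH (real (Suc n) + y) * (1 / real (Suc n) - 1 / (real (Suc n) + y))"
  proof (rule mult_mono)
    show "sH (real (Suc n) + x) \<le> sH (real (Suc n) + y)" using assms by (intro sH_mono) auto
    show "1 / real (Suc n) - 1 / (real (Suc n) + x) \<le> 1 / real (Suc n) - 1 / (real (Suc n) + y)"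
      using assms by (intro diff_left_mono divide_left_mono) auto
    show "0 \<le> sH (real (Suc n) + y)" using assms by (intro sH_nonneg) auto
    show "0 \<le> 1 / real (Suc n) - 1 / (real (Suc n) + x)" using assms by (intro sH_term_nonneg) auto
  qed
next
  show "0 \<le> x" "0 \<le> y" using assms by auto
qed

lemma Phi_mono: assumes "0 \<le> x" "x \<le> y" shows "Phi x \<le> Phi y"
  unfolding Phi_def using assms
  by (intro add_mono power_mono sH_mono sH_nonneg sHm2_mono) auto

lemma UH_closed: assumes x: "x \<ge> 0" shows "UU sH x = Phi x"
proof -
  define F where "F = nat \<lfloor>x\<rfloor>"
  define e where "e = (\<lambda>k::nat. 2 * sH (real k + 1) / (real k + 1))"
  have F: "real F \<le> x" "x < real F + 1" unfolding F_def using x by linarith+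
  have bound: "\<bar>UU sH x - Phi x\<bar> \<le> e (F + n)" for n
  proof -
    define M where "M = F + n"
    have M: "real M \<le> x + real n" "x + real n \<le> real M + 1" unfolding M_def using F by auto
    have eq: "UU sH x - Phi x = UU sH (x + real n) - Phi (x + real n)" using Dshift[OF x] by simp
    have PM: "Phi (real M + 1) - Phi (real M) = e M"
      using PhiD[of "real M + 1"] unfolding e_def by simp
    have U1: "UU sH (x + real n) \<le> UU sH (real M + 1)" using M x by (intro U_mono) auto
    have U2: "UU sH (real M) \<le> UU sH (x + real n)" using M x by (intro U_mono) auto
    have P1: "Phi (x + real n) \<le> Phi (real M + 1)" using M x by (intro Phi_mono) auto
    have P2: "Phi (real M) \<le> Phi (x + real n)" using M x by (intro Phi_mono) auto
    have N1: "UU sH (real M + 1) = Phi (real M + 1)" using Dnat[of "Suc M"] by (simp add: add.commute)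
    have N2: "UU sH (real M) = Phi (real M)" by (rule Dnat)
    show ?thesis unfolding M_def[symmetric] using eq PM U1 U2 P1 P2 N1 N2 by linarith
  qed
  have lim: "e \<longlonglongrightarrow> 0"
  proof -
    have "(\<lambda>m. sH (real m + 1) / (real m + 1)) \<longlonglongrightarrow> 0" using f_over_lim[OF sH_bnd, of "1::real"] by simp
    hence "(\<lambda>m. 2 * (sH (real m + 1) / (real m + 1))) \<longlonglongrightarrow> 2 * 0" by (intro tendsto_intros)
    thus ?thesis unfolding e_def by simp
  qed
  hence "(\<lambda>n. e (n + F)) \<longlonglongrightarrow> 0" by (rule LIMSEQ_ignore_initial_segment[where k = F, simplified])
  hence "\<bar>UU sH x - Phi x\<bar> \<le> 0"
    by (rule LIMSEQ_le_const) (use bound in \<open>auto simp: add.commute\<close>)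
  thus ?thesis by simp
qed

lemma aux_frac2: "(m::real) > 0 \<Longrightarrow> x > 0 \<Longrightarrow>
  1 / (m + x) ^ 2 / m = (1 / m - 1 / (m + x)) / x ^ 2 - (1 / m ^ 2 - (1 / m ^ 2 - 1 / (m + x) ^ 2)) / x"
proof -
  assume a: "m > 0" "x > 0"
  define y where "y = m + x"
  have y: "y > 0" "x = y - m" unfolding y_def using a by auto
  have 1: "1 / m - 1 / y = x / (m * y)" using a y by (simp add: field_simps)
  have 2: "(x / (m * y)) / x ^ 2 = 1 / (x * m * y)" using a y by (simp add: power2_eq_square)
  have 3: "(1 / m ^ 2 - (1 / m ^ 2 - 1 / y ^ 2)) / x = 1 / (x * y ^ 2)" by simp
  have 4: "1 / (x * m * y) - 1 / (x * y ^ 2) = (y - m) / (x * m * y ^ 2)"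
    using a y by (simp add: field_simps power2_eq_square)
  have 5: "(y - m) / (x * m * y ^ 2) = 1 / y ^ 2 / m" using a y by simp
  show ?thesis unfolding y_def[symmetric] 1 2 3 4 5 by simp
qed

lemma sum_sq_series:
  assumes x: "x > 0"
  shows "(\<lambda>n. 1 / (real (Suc n) + x) ^ 2 / real (Suc n)) sums (sH x / x ^ 2 - (zeta2 - sHm 2 x) / x)"
proof -
  have a: "(\<lambda>n. (1 / real (Suc n) - 1 / (real (Suc n) + x)) / x ^ 2) sums (sH x / x ^ 2)"
    using x by (intro sums_divide sH_sums) auto
  have b: "(\<lambda>n. (1 / real (Suc n) ^ 2 - (1 / real (Suc n) ^ 2 - 1 / (real (Suc n) + x) ^ 2)) / x) sums ((zeta2 - sHm 2 x) / x)"
    using x by (intro sums_divide sums_diff zeta2_sums sHm_sums) auto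
  have "(\<lambda>n. (1 / real (Suc n) - 1 / (real (Suc n) + x)) / x ^ 2 - (1 / real (Suc n) ^ 2 - (1 / real (Suc n) ^ 2 - 1 / (real (Suc n) + x) ^ 2)) / x)
     sums (sH x / x ^ 2 - (zeta2 - sHm 2 x) / x)" by (rule sums_diff[OF a b])
  moreover have "(\<lambda>n. (1 / real (Suc n) - 1 / (real (Suc n) + x)) / x ^ 2 - (1 / real (Suc n) ^ 2 - (1 / real (Suc n) ^ 2 - 1 / (real (Suc n) + x) ^ 2)) / x)
     = (\<lambda>n. 1 / (real (Suc n) + x) ^ 2 / real (Suc n))"
    using x by (intro ext aux_frac2[symmetric]) auto
  ultimately show ?thesis by simp
qed

lemma D2: assumes x: "x \<ge> 1"
  shows "UU (sHm 2) x - UU (sHm 2) (x - 1) = sH x / x ^ 2 + (2 * sHm 2 x - zeta2) / x"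
proof -
  have "(\<lambda>n. (sHm 2 (real (Suc n) + x) - sHm 2 (real (Suc n) + x - 1)) / real (Suc n))
      = (\<lambda>n. 1 / (real (Suc n) + x) ^ 2 / real (Suc n))"
  proof
    fix n
    have "sHm 2 (real (Suc n) + x) = sHm 2 (real (Suc n) + x - 1) + 1 / (real (Suc n) + x) ^ 2"
      using x by (intro sHm_rec) auto
    thus "(sHm 2 (real (Suc n) + x) - sHm 2 (real (Suc n) + x - 1)) / real (Suc n)
        = 1 / (real (Suc n) + x) ^ 2 / real (Suc n)" by simp
  qed
  hence "(\<lambda>n. (sHm 2 (real (Suc n) + x) - sHm 2 (real (Suc n) + x - 1)) / real (Suc n))
      sums (sH x / x ^ 2 - (zeta2 - sHm 2 x) / x)" using sum_sq_series[of x] x by simp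
  from U_diff[OF sHm2_bound x this]
  show ?thesis using x by (simp add: field_simps)
qed

lemma D3: assumes x: "x \<ge> 1"
  shows "UU (\<lambda>y. sH y ^ 2) x - UU (\<lambda>y. sH y ^ 2) (x - 1)
    = 2 * UU sH x / x - (sH x / x ^ 2 - (zeta2 - sHm 2 x) / x) + sH x ^ 2 / x"
proof -
  have e: "(\<lambda>n. (sH (real (Suc n) + x) ^ 2 - sH (real (Suc n) + x - 1) ^ 2) / real (Suc n))
      = (\<lambda>n. 2 / x * (sH (real (Suc n) + x) * (1 / real (Suc n) - 1 / (real (Suc n) + x)))
            - 1 / (real (Suc n) + x) ^ 2 / real (Suc n))"
  proof
    fix n
    define m where "m = real (Suc n)"
    define H where "H = sH (m + x)"
    have m: "m > 0" unfolding m_def by simp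
    have mx: "m + x > 0" using m x by simp
    have r: "sH (m + x - 1) = H - 1 / (m + x)" unfolding H_def using sH_rec[of "m + x"] x m by simp
    have "(H ^ 2 - (H - 1 / (m + x)) ^ 2) / m = 2 / x * (H * (1 / m - 1 / (m + x))) - 1 / (m + x) ^ 2 / m"
    proof -
      define y where "y = m + x"
      have y: "y > 0" "x = y - m" unfolding y_def using m x by auto
      have 1: "1 / m - 1 / y = x / (m * y)" using m y by (simp add: field_simps)
      have 2: "2 / x * (H * (x / (m * y))) = 2 * H / y / m" using x by simp
      have 3: "(H ^ 2 - (H - 1 / y) ^ 2) = 2 * H / y - 1 / y ^ 2" by (simp add: power2_eq_square algebra_simps)
      have 4: "(2 * H / y - 1 / y ^ 2) / m = 2 * H / y / m - 1 / y ^ 2 / m" by (simp add: diff_divide_distrib)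
      show ?thesis unfolding y_def[symmetric] 1 2 3 4 ..
    qed
    thus "(sH (real (Suc n) + x) ^ 2 - sH (real (Suc n) + x - 1) ^ 2) / real (Suc n)
      = 2 / x * (sH (real (Suc n) + x) * (1 / real (Suc n) - 1 / (real (Suc n) + x)))
            - 1 / (real (Suc n) + x) ^ 2 / real (Suc n)"
      using r unfolding H_def m_def by simp
  qed
  have "(\<lambda>n. 2 / x * (sH (real (Suc n) + x) * (1 / real (Suc n) - 1 / (real (Suc n) + x)))
            - 1 / (real (Suc n) + x) ^ 2 / real (Suc n))
     sums (2 / x * UU sH x - (sH x / x ^ 2 - (zeta2 - sHm 2 x) / x))"
    using x by (intro sums_diff sums_mult U_sums[OF sH_bnd] sum_sq_series) auto
  hence "(\<lambda>n. (sH (real (Suc n) + x) ^ 2 - sH (real (Suc n) + x - 1) ^ 2) / real (Suc n))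
     sums (2 / x * UU sH x - (sH x / x ^ 2 - (zeta2 - sHm 2 x) / x))" unfolding e .
  hence "(\<lambda>n. ((\<lambda>y. sH y ^ 2) (real (Suc n) + x) - (\<lambda>y. sH y ^ 2) (real (Suc n) + x - 1)) / real (Suc n))
     sums (2 / x * UU sH x - (sH x / x ^ 2 - (zeta2 - sHm 2 x) / x))" by simp
  from U_diff[OF sHsq_bnd x this] show ?thesis by simp
qed

definition Psi :: "real \<Rightarrow> real" where
  "Psi x = 2 * sHm 3 x + 2 * sH x * sHm 2 x - sH x * zeta2"
definition Theta :: "real \<Rightarrow> real" where
  "Theta x = sH x ^ 3 + sH x * sHm 2 x + sH x * zeta2"

lemma PsiD: assumes x: "x \<ge> 1"
  shows "UU (sHm 2) x - UU (sHm 2) (x - 1) = Psi x - Psi (x - 1) - sH x / x ^ 2"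
proof -
  have a: "sH (x - 1) = sH x - 1 / x" using sH_rec[OF x] by simp
  have b: "sHm 2 (x - 1) = sHm 2 x - 1 / x ^ 2" using sHm_rec[OF x, of 2] by simp
  have c: "sHm 3 (x - 1) = sHm 3 x - 1 / x ^ 3" using sHm_rec[OF x, of 3] by simp
  show ?thesis unfolding D2[OF x] Psi_def a b c using x
    by (simp add: field_simps power2_eq_square power3_eq_cube)
qed

lemma ThetaD: assumes x: "x \<ge> 1"
  shows "UU (\<lambda>y. sH y ^ 2) x - UU (\<lambda>y. sH y ^ 2) (x - 1) = Theta x - Theta (x - 1) + sH x / x ^ 2"
proof -
  have a: "sH (x - 1) = sH x - 1 / x" using sH_rec[OF x] by simp
  have b: "sHm 2 (x - 1) = sHm 2 x - 1 / x ^ 2" using sHm_rec[OF x, of 2] by simp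
  have u: "UU sH x = sH x ^ 2 + sHm 2 x" using UH_closed[of x] x unfolding Phi_def by simp
  show ?thesis unfolding D3[OF x] Theta_def a b u using x
    by (simp add: field_simps power2_eq_square power3_eq_cube)
qed

lemma telescope_gen:
  fixes V G c :: "real \<Rightarrow> real"
  assumes "\<And>x. x \<ge> 1 \<Longrightarrow> V x - V (x - 1) = G x - G (x - 1) + c x" and b: "b \<ge> 0"
  shows "V (b + real j) - V b = G (b + real j) - G b + (\<Sum>i=1..j. c (b + real i))"
proof (induction j)
  case 0 thus ?case by simp
next
  case (Suc j)
  have "V (b + real (Suc j)) - V (b + real (Suc j) - 1) = G (b + real (Suc j)) - G (b + real (Suc j) - 1) + c (b + real (Suc j))"
    using b by (intro assms(1)) auto
  moreover have "b + real (Suc j) - 1 = b + real j" by simp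
  ultimately show ?case using Suc by simp
qed

lemma tele2: "b \<ge> 0 \<Longrightarrow> UU (sHm 2) (b + real j) - UU (sHm 2) b
   = Psi (b + real j) - Psi b + (\<Sum>i=1..j. - (sH (b + real i) / (b + real i) ^ 2))"
  by (rule telescope_gen) (use PsiD in auto)

lemma tele3: "b \<ge> 0 \<Longrightarrow> UU (\<lambda>y. sH y ^ 2) (b + real j) - UU (\<lambda>y. sH y ^ 2) b
   = Theta (b + real j) - Theta b + (\<Sum>i=1..j. sH (b + real i) / (b + real i) ^ 2)"
  by (rule telescope_gen) (use ThetaD in auto)

lemma altsum_poch:
  "x > 0 \<Longrightarrow> (\<Sum>j\<le>n. (-1) ^ j * real (n choose j) / (x + real j)) = fact n / pochhammer x (Suc n)"
proof (induction n arbitrary: x)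
  case 0 thus ?case by simp
next
  case (Suc n)
  define g where "g = (\<lambda>j. (-1) ^ j * real (n choose j) / (x + real j))"
  define h where "h = (\<lambda>j. (-1) ^ j * real (n choose j) / (x + 1 + real j))"
  have A: "(\<Sum>j\<le>Suc n. (-1) ^ j * real (Suc n choose j) / (x + real j)) = (\<Sum>j\<le>Suc n. g j) - (\<Sum>j\<le>n. h j)"
  proof -
    have "(\<Sum>j\<le>Suc n. (-1) ^ j * real (Suc n choose j) / (x + real j))
        = 1 / x + (\<Sum>i\<le>n. (-1) ^ Suc i * real (Suc n choose Suc i) / (x + real (Suc i)))"
      by (subst sum.atMost_Suc_shift) simp
    also have "(\<Sum>i\<le>n. (-1) ^ Suc i * real (Suc n choose Suc i) / (x + real (Suc i)))
        = (\<Sum>i\<le>n. g (Suc i) - h i)"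
    proof (intro sum.cong refl)
      fix i
      have gen: "\<And>A B d::real. (-1) ^ Suc i * (A + B) / d = (-1) ^ Suc i * B / d - (-1) ^ i * A / d"
        by (simp add: divide_inverse algebra_simps)
      have e1: "x + real (Suc i) = x + 1 + real i" by simp
      show "(-1) ^ Suc i * real (Suc n choose Suc i) / (x + real (Suc i)) = g (Suc i) - h i"
        unfolding g_def h_def binomial_Suc_Suc of_nat_add gen e1 ..
    qed
    also have "\<dots> = (\<Sum>i\<le>n. g (Suc i)) - (\<Sum>i\<le>n. h i)" by (rule sum_subtractf)
    also have "1 / x + ((\<Sum>i\<le>n. g (Suc i)) - (\<Sum>i\<le>n. h i)) = (g 0 + (\<Sum>i\<le>n. g (Suc i))) - (\<Sum>i\<le>n. h i)"
      by (simp add: g_def)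
    also have "g 0 + (\<Sum>i\<le>n. g (Suc i)) = (\<Sum>j\<le>Suc n. g j)" by (subst sum.atMost_Suc_shift) simp
    finally show ?thesis .
  qed
  have B: "(\<Sum>j\<le>Suc n. g j) = (\<Sum>j\<le>n. g j)" by (simp add: g_def)
  have IH1: "(\<Sum>j\<le>n. g j) = fact n / pochhammer x (Suc n)" unfolding g_def using Suc by blast
  have IH2: "(\<Sum>j\<le>n. h j) = fact n / pochhammer (x + 1) (Suc n)" unfolding h_def using Suc.IH[of "x + 1"] Suc.prems
    by (simp add: add_ac)
  define Q where "Q = pochhammer (x + 1) n"
  have Q: "Q > 0" unfolding Q_def using Suc.prems by (intro pochhammer_pos) simp
  have p1: "pochhammer x (Suc n) = x * Q" unfolding Q_def by (simp add: pochhammer_rec)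
  have p2: "pochhammer (x + 1) (Suc n) = Q * (x + 1 + real n)" unfolding Q_def by (simp add: pochhammer_Suc)
  have p3: "pochhammer x (Suc (Suc n)) = x * (Q * (x + 1 + real n))" using p2 by (simp add: pochhammer_rec)
  have f: "fact (Suc n) = (real n + 1) * fact n" by simp
  have C: "fact n / (x * Q) - fact n / (Q * (x + 1 + real n)) = (real n + 1) * fact n / (x * (Q * (x + 1 + real n)))"
  proof -
    define y where "y = x + 1 + real n"
    have y: "y > 0" "real n + 1 = y - x" unfolding y_def using Suc.prems by auto
    have "fact n / (x * Q) - fact n / (Q * y) = (y - x) * fact n / (x * (Q * y))"
      using Q Suc.prems y by (simp add: field_simps)
    thus ?thesis unfolding y_def[symmetric] y(2) .
  qed
  show ?case unfolding A B IH1 IH2 p1 p2 p3 f C ..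
qed

lemma partial_frac:
  assumes k: "k \<ge> 2"
  shows "1 / real ((N + k + r) choose k) = real k * (\<Sum>j=1..k-1. (-1) ^ (j+1) * real ((k-1) choose j) *
           (1 / (real N + real r + 1) - 1 / (real N + real r + 1 + real j)))"
proof -
  define x where "x = real N + real r + 1"
  have x: "x > 0" unfolding x_def by simp
  have bin: "real ((N + k + r) choose k) = pochhammer x k / fact k"
    unfolding binomial_gbinomial gbinomial_pochhammer' x_def by (simp add: add_ac)
  obtain k' where k': "k = Suc k'" "k' \<ge> 1" using k by (cases k) auto
  have fk: "fact k = real k * fact k'" using k' by simp
  have pk: "pochhammer x k > 0" using x by (intro pochhammer_pos)
  have "1 / real ((N + k + r) choose k) = real k * (fact k' / pochhammer x (Suc k'))"
    unfolding bin fk using pk k' by simp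
  also have "fact k' / pochhammer x (Suc k') = (\<Sum>j\<le>k'. (-1) ^ j * real (k' choose j) / (x + real j))"
    using altsum_poch[OF x] by simp
  also have "\<dots> = (\<Sum>j\<le>k'. (-1) ^ j * real (k' choose j) / (x + real j)) - (\<Sum>j\<le>k'. (-1) ^ j * real (k' choose j)) / x"
    using choose_alternating_sum[of k', where 'a=real] k' by simp
  also have "\<dots> = (\<Sum>j\<le>k'. (-1) ^ j * real (k' choose j) * (1 / (x + real j) - 1 / x))"
    by (simp add: sum_divide_distrib sum_subtractf[symmetric] algebra_simps)
  also have "\<dots> = (\<Sum>j\<in>insert 0 {1..k'}. (-1) ^ j * real (k' choose j) * (1 / (x + real j) - 1 / x))"
    by (intro sum.cong) auto
  also have "\<dots> = (\<Sum>j=1..k'. (-1) ^ j * real (k' choose j) * (1 / (x + real j) - 1 / x))"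
    by (subst sum.insert) auto
  also have "\<dots> = (\<Sum>j=1..k-1. (-1) ^ (j+1) * real ((k-1) choose j) * (1 / x - 1 / (x + real j)))"
    using k' by (intro sum.cong) (auto simp: algebra_simps)
  finally show ?thesis unfolding x_def .
qed

lemma assemble:
  fixes f :: "real \<Rightarrow> real"
  assumes k: "k \<ge> 2"
    and E: "\<And>j. j \<in> {1..k-1} \<Longrightarrow> (\<lambda>n. f (real (Suc n) + a) *
        (1 / (real (Suc n) + real r + 1) - 1 / (real (Suc n) + real r + 1 + real j))) sums E j"
  shows "(\<lambda>n. f (real (Suc n) + a) / real ((Suc n + k + r) choose k)) sums
      (real k * (\<Sum>j=1..k-1. (-1) ^ (j+1) * real ((k-1) choose j) * E j))"
proof -
  have "(\<lambda>n. real k * (\<Sum>j=1..k-1. (-1) ^ (j+1) * real ((k-1) choose j) * (f (real (Suc n) + a) *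
        (1 / (real (Suc n) + real r + 1) - 1 / (real (Suc n) + real r + 1 + real j))))) sums
      (real k * (\<Sum>j=1..k-1. (-1) ^ (j+1) * real ((k-1) choose j) * E j))"
    by (intro sums_mult sums_sum E) auto
  moreover have "(\<lambda>n. real k * (\<Sum>j=1..k-1. (-1) ^ (j+1) * real ((k-1) choose j) * (f (real (Suc n) + a) *
        (1 / (real (Suc n) + real r + 1) - 1 / (real (Suc n) + real r + 1 + real j)))))
      = (\<lambda>n. f (real (Suc n) + a) / real ((Suc n + k + r) choose k))"
  proof
    fix n
    have "f (real (Suc n) + a) / real ((Suc n + k + r) choose k) = f (real (Suc n) + a) * (1 / real ((Suc n + k + r) choose k))"
      by simp
    also note partial_frac[OF k, of "Suc n" r]
    finally show "real k * (\<Sum>j=1..k-1. (-1) ^ (j+1) * real ((k-1) choose j) * (f (real (Suc n) + a) *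
        (1 / (real (Suc n) + real r + 1) - 1 / (real (Suc n) + real r + 1 + real j))))
      = f (real (Suc n) + a) / real ((Suc n + k + r) choose k)"
      by (simp add: sum_distrib_left sum_distrib_right algebra_simps)
  qed
  ultimately show ?thesis by simp
qed

definition Cr :: "(real \<Rightarrow> real) \<Rightarrow> real \<Rightarrow> nat \<Rightarrow> real" where
  "Cr f c s = (\<Sum>i<s. f (real (Suc i) + c) * (1 / real (Suc i) - 1 / (real (Suc i) + c)))"

lemma series_shift:
  assumes L: "(\<lambda>n. f (real (Suc n) + c) * (1 / real (Suc n) - 1 / (real (Suc n) + c))) sums L"
    and c: "c = a - real s"
  shows "(\<lambda>n. f (real (Suc n) + a) * (1 / (real (Suc n) + real s) - 1 / (real (Suc n) + a))) sums (L - Cr f c s)"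
proof -
  define g where "g = (\<lambda>n. f (real (Suc n) + c) * (1 / real (Suc n) - 1 / (real (Suc n) + c)))"
  have "(\<lambda>i. g (i + s)) sums (L - Cr f c s)"
    using sums_iff_shift[of g s "L - Cr f c s"] L unfolding g_def Cr_def by simp
  moreover have "(\<lambda>i. g (i + s)) = (\<lambda>n. f (real (Suc n) + a) * (1 / (real (Suc n) + real s) - 1 / (real (Suc n) + a)))"
  proof
    fix i
    have 1: "real (Suc (i + s)) + c = real (Suc i) + a" using c by simp
    have 2: "real (Suc (i + s)) = real (Suc i) + real s" by simp
    show "g (i + s) = f (real (Suc i) + a) * (1 / (real (Suc i) + real s) - 1 / (real (Suc i) + a))"
      unfolding g_def 1 unfolding 2 ..
  qed
  ultimately show ?thesis by simp
qed

lemma per_j: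
  assumes b: "\<And>y. y \<ge> 1 \<Longrightarrow> \<bar>f y\<bar> \<le> C * sqrt y" and h: "a - real r - 1 - real j \<ge> 0"
  shows "(\<lambda>n. f (real (Suc n) + a) *
        (1 / (real (Suc n) + real r + 1) - 1 / (real (Suc n) + real r + 1 + real j))) sums
     ((UU f (a - real r - 1) - Cr f (a - real r - 1) (r+1))
       - (UU f (a - real r - 1 - real j) - Cr f (a - real r - 1 - real j) (r+1+j)))"
proof -
  have S1: "(\<lambda>n. f (real (Suc n) + a) * (1 / (real (Suc n) + real (r+1)) - 1 / (real (Suc n) + a))) sums
      (UU f (a - real r - 1) - Cr f (a - real r - 1) (r+1))"
    by (rule series_shift[OF U_sums[OF b]]) (use h in auto)
  have S2: "(\<lambda>n. f (real (Suc n) + a) * (1 / (real (Suc n) + real (r+1+j)) - 1 / (real (Suc n) + a))) sums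
      (UU f (a - real r - 1 - real j) - Cr f (a - real r - 1 - real j) (r+1+j))"
    by (rule series_shift[OF U_sums[OF b]]) (use h in auto)
  have "(\<lambda>n. f (real (Suc n) + a) * (1 / (real (Suc n) + real (r+1)) - 1 / (real (Suc n) + a))
           - f (real (Suc n) + a) * (1 / (real (Suc n) + real (r+1+j)) - 1 / (real (Suc n) + a))) sums
     ((UU f (a - real r - 1) - Cr f (a - real r - 1) (r+1))
       - (UU f (a - real r - 1 - real j) - Cr f (a - real r - 1 - real j) (r+1+j)))"
    by (rule sums_diff[OF S1 S2])
  moreover have "(\<lambda>n. f (real (Suc n) + a) * (1 / (real (Suc n) + real (r+1)) - 1 / (real (Suc n) + a))
           - f (real (Suc n) + a) * (1 / (real (Suc n) + real (r+1+j)) - 1 / (real (Suc n) + a)))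
      = (\<lambda>n. f (real (Suc n) + a) *
        (1 / (real (Suc n) + real r + 1) - 1 / (real (Suc n) + real r + 1 + real j)))"
    by (intro ext) (simp add: algebra_simps)
  ultimately show ?thesis by simp
qed

lemma corr:
  assumes c: "c \<ge> 0"
  shows "(- c) * (\<Sum>i=1..s. F (c + real i) / (real i * (c + real i))) = - Cr F c s"
proof -
  have "(\<Sum>i=1..s. F (c + real i) / (real i * (c + real i))) = (\<Sum>i<s. F (c + real (Suc i)) / (real (Suc i) * (c + real (Suc i))))"
    unfolding One_nat_def by (rule sum.atLeast1_atMost_eq)
  hence "(- c) * (\<Sum>i=1..s. F (c + real i) / (real i * (c + real i)))
      = (\<Sum>i<s. (- c) * (F (c + real (Suc i)) / (real (Suc i) * (c + real (Suc i)))))"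
    by (simp add: sum_distrib_left)
  also have "\<dots> = (\<Sum>i<s. - (F (real (Suc i) + c) * (1 / real (Suc i) - 1 / (real (Suc i) + c))))"
  proof (intro sum.cong refl)
    fix i
    define m where "m = real (Suc i)"
    have m: "m > 0" "c + m > 0" unfolding m_def using c by auto
    have "(- c) * (F (c + m) / (m * (c + m))) = - (F (m + c) * (1 / m - 1 / (m + c)))"
      using m by (simp add: field_simps add.commute)
    thus "(- c) * (F (c + real (Suc i)) / (real (Suc i) * (c + real (Suc i))))
      = - (F (real (Suc i) + c) * (1 / real (Suc i) - 1 / (real (Suc i) + c)))" unfolding m_def .
  qed
  also have "\<dots> = - Cr F c s" unfolding Cr_def by (simp add: sum_negf)
  finally show ?thesis .
qed

lemma brace1:
  fixes k r j :: nat and a :: real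
  assumes h: "a - real r - 1 - real j \<ge> 0"
  shows "(UU sH (a - real r - 1) - Cr sH (a - real r - 1) (r+1))
       - (UU sH (a - real r - 1 - real j) - Cr sH (a - real r - 1 - real j) (r+1+j))
   = sH (a - r - 1) ^ 2 + sHm 2 (a - r - 1)
          - sH (a - r - 1 - j) ^ 2 - sHm 2 (a - r - 1 - j)
          - (real (r + 1 + j) - a) * (\<Sum>i=1..r+1+j. sH (a + i - r - 1 - j) / (real i * (a + i - r - 1 - j)))
          + (real (r + 1) - a) * (\<Sum>i=1..r+1. sH (a + i - r - 1) / (real i * (a + i - r - 1)))"
proof -
  define b where "b = a - real r - 1"
  define b' where "b' = a - real r - 1 - real j"
  have b': "b' \<ge> 0" using h unfolding b'_def .
  have b: "b \<ge> 0" using h unfolding b_def by simp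
  have s1: "(\<Sum>i=1..r+1. sH (a + i - r - 1) / (real i * (a + i - r - 1))) = (\<Sum>i=1..r+1. sH (b + real i) / (real i * (b + real i)))"
    by (intro sum.cong refl) (simp add: b_def algebra_simps)
  have s2: "(\<Sum>i=1..r+1+j. sH (a + i - r - 1 - j) / (real i * (a + i - r - 1 - j))) = (\<Sum>i=1..r+1+j. sH (b' + real i) / (real i * (b' + real i)))"
    by (intro sum.cong refl) (simp add: b'_def algebra_simps)
  have c1: "real (r + 1) - a = - b" unfolding b_def by simp
  have c2: "real (r + 1 + j) - a = - b'" unfolding b'_def by simp
  have u1: "UU sH b = sH b ^ 2 + sHm 2 b" using UH_closed[OF b] unfolding Phi_def .
  have u2: "UU sH b' = sH b' ^ 2 + sHm 2 b'" using UH_closed[OF b'] unfolding Phi_def .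
  show ?thesis unfolding s1 s2 c1 c2 corr[OF b] corr[OF b'] b'_def[symmetric] unfolding b_def[symmetric] u1 u2
    by simp
qed

lemma brace2:
  fixes k r j :: nat and a :: real
  assumes h: "a - real r - 1 - real j \<ge> 0"
  shows "(UU (sHm 2) (a - real r - 1) - Cr (sHm 2) (a - real r - 1) (r+1))
       - (UU (sHm 2) (a - real r - 1 - real j) - Cr (sHm 2) (a - real r - 1 - real j) (r+1+j))
   = (real (r + 1) - a) * (\<Sum>i=1..r+1. sHm 2 (a + i - r - 1) / (real i * (a + i - r - 1)))
          - (real (r + 1 + j) - a) * (\<Sum>i=1..r+1+j. sHm 2 (a + i - r - 1 - j) / (real i * (a + i - r - 1 - j)))
          - (\<Sum>i=1..j. sH (a + i - r - 1 - j) / (a + i - r - 1 - j) ^ 2)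
          + 2 * sHm 3 (a - r - 1) + sH (a - r - 1 - j) * zeta2
          + 2 * sH (a - r - 1) * sHm 2 (a - r - 1)
          - 2 * sHm 3 (a - r - 1 - j) - sH (a - r - 1) * zeta2
          - 2 * sH (a - r - 1 - j) * sHm 2 (a - r - 1 - j)"
proof -
  define b where "b = a - real r - 1"
  define b' where "b' = a - real r - 1 - real j"
  have b': "b' \<ge> 0" using h unfolding b'_def .
  have b: "b \<ge> 0" using h unfolding b_def by simp
  have bb: "b = b' + real j" unfolding b_def b'_def by simp
  have s1: "(\<Sum>i=1..r+1. sHm 2 (a + i - r - 1) / (real i * (a + i - r - 1))) = (\<Sum>i=1..r+1. sHm 2 (b + real i) / (real i * (b + real i)))"
    by (intro sum.cong refl) (simp add: b_def algebra_simps)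
  have s2: "(\<Sum>i=1..r+1+j. sHm 2 (a + i - r - 1 - j) / (real i * (a + i - r - 1 - j))) = (\<Sum>i=1..r+1+j. sHm 2 (b' + real i) / (real i * (b' + real i)))"
    by (intro sum.cong refl) (simp add: b'_def algebra_simps)
  have s3: "(\<Sum>i=1..j. sH (a + i - r - 1 - j) / (a + i - r - 1 - j) ^ 2) = (\<Sum>i=1..j. sH (b' + real i) / (b' + real i) ^ 2)"
    by (intro sum.cong refl) (simp add: b'_def algebra_simps)
  have c1: "real (r + 1) - a = - b" unfolding b_def by simp
  have c2: "real (r + 1 + j) - a = - b'" unfolding b'_def by simp
  have t: "UU (sHm 2) b - UU (sHm 2) b' = Psi b - Psi b' + (\<Sum>i=1..j. - (sH (b' + real i) / (b' + real i) ^ 2))"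
    unfolding bb by (rule tele2[OF b'])
  have t': "(\<Sum>i=1..j. - (sH (b' + real i) / (b' + real i) ^ 2)) = - (\<Sum>i=1..j. sH (b' + real i) / (b' + real i) ^ 2)"
    by (simp add: sum_negf)
  show ?thesis unfolding s1 s2 s3 c1 c2 corr[OF b] corr[OF b'] b'_def[symmetric] unfolding b_def[symmetric]
    using t t' unfolding Psi_def by simp
qed

lemma brace3:
  fixes k r j :: nat and a :: real
  assumes h: "a - real r - 1 - real j \<ge> 0"
  shows "(UU (\<lambda>y. sH y ^ 2) (a - real r - 1) - Cr (\<lambda>y. sH y ^ 2) (a - real r - 1) (r+1))
       - (UU (\<lambda>y. sH y ^ 2) (a - real r - 1 - real j) - Cr (\<lambda>y. sH y ^ 2) (a - real r - 1 - real j) (r+1+j))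
   = sH (a - r - 1) ^ 3 + sH (a - r - 1) * sHm 2 (a - r - 1) + sH (a - r - 1) * zeta2
          - sH (a - r - 1 - j) ^ 3 - sH (a - r - 1 - j) * sHm 2 (a - r - 1 - j) - sH (a - r - 1 - j) * zeta2
          + (real (r + 1) - a) * (\<Sum>i=1..r+1. sH (a + i - r - 1) ^ 2 / (real i * (a + i - r - 1)))
          + (\<Sum>i=1..j. sH (a + i - r - 1 - j) / (a + i - r - 1 - j) ^ 2)
          - (real (r + 1 + j) - a) * (\<Sum>i=1..r+1+j. sH (a + i - r - 1 - j) ^ 2 / (real i * (a + i - r - 1 - j)))"
proof -
  define b where "b = a - real r - 1"
  define b' where "b' = a - real r - 1 - real j"
  have b': "b' \<ge> 0" using h unfolding b'_def .
  have b: "b \<ge> 0" using h unfolding b_def by simp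
  have bb: "b = b' + real j" unfolding b_def b'_def by simp
  have s1: "(\<Sum>i=1..r+1. sH (a + i - r - 1) ^ 2 / (real i * (a + i - r - 1))) = (\<Sum>i=1..r+1. (\<lambda>y. sH y ^ 2) (b + real i) / (real i * (b + real i)))"
    by (intro sum.cong refl) (simp add: b_def algebra_simps)
  have s2: "(\<Sum>i=1..r+1+j. sH (a + i - r - 1 - j) ^ 2 / (real i * (a + i - r - 1 - j))) = (\<Sum>i=1..r+1+j. (\<lambda>y. sH y ^ 2) (b' + real i) / (real i * (b' + real i)))"
    by (intro sum.cong refl) (simp add: b'_def algebra_simps)
  have s3: "(\<Sum>i=1..j. sH (a + i - r - 1 - j) / (a + i - r - 1 - j) ^ 2) = (\<Sum>i=1..j. sH (b' + real i) / (b' + real i) ^ 2)"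
    by (intro sum.cong refl) (simp add: b'_def algebra_simps)
  have c1: "real (r + 1) - a = - b" unfolding b_def by simp
  have c2: "real (r + 1 + j) - a = - b'" unfolding b'_def by simp
  have t: "UU (\<lambda>y. sH y ^ 2) b - UU (\<lambda>y. sH y ^ 2) b' = Theta b - Theta b' + (\<Sum>i=1..j. sH (b' + real i) / (b' + real i) ^ 2)"
    unfolding bb by (rule tele3[OF b'])
  have k1: "(- b) * (\<Sum>i=1..r+1. (\<lambda>y. sH y ^ 2) (b + real i) / (real i * (b + real i))) = - Cr (\<lambda>y. sH y ^ 2) b (r+1)"
    by (rule corr[OF b])
  have k2: "(- b') * (\<Sum>i=1..r+1+j. (\<lambda>y. sH y ^ 2) (b' + real i) / (real i * (b' + real i))) = - Cr (\<lambda>y. sH y ^ 2) b' (r+1+j)"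
    by (rule corr[OF b'])
  show ?thesis unfolding s1 s2 s3 c1 c2 k1 k2 b'_def[symmetric] unfolding b_def[symmetric]
    using t unfolding Theta_def by simp
qed

theorem mainTheorem17:
  fixes k r :: nat and a :: real
  assumes "k \<ge> 2" and "a > real (k + r)"
  shows
   "(\<lambda>n. sH (real (Suc n) + a) / real ((Suc n + k + r) choose k)) sums
      (real k * (\<Sum>j=1..k-1. (-1) ^ (j+1) * real ((k-1) choose j) *
        ( sH (a - r - 1) ^ 2 + sHm 2 (a - r - 1)
          - sH (a - r - 1 - j) ^ 2 - sHm 2 (a - r - 1 - j)
          - (real (r + 1 + j) - a) * (\<Sum>i=1..r+1+j. sH (a + i - r - 1 - j) / (real i * (a + i - r - 1 - j)))
          + (real (r + 1) - a) * (\<Sum>i=1..r+1. sH (a + i - r - 1) / (real i * (a + i - r - 1))))))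
    \<and> (\<lambda>n. sHm 2 (real (Suc n) + a) / real ((Suc n + k + r) choose k)) sums
      (real k * (\<Sum>j=1..k-1. (-1) ^ (j+1) * real ((k-1) choose j) *
        ( (real (r + 1) - a) * (\<Sum>i=1..r+1. sHm 2 (a + i - r - 1) / (real i * (a + i - r - 1)))
          - (real (r + 1 + j) - a) * (\<Sum>i=1..r+1+j. sHm 2 (a + i - r - 1 - j) / (real i * (a + i - r - 1 - j)))
          - (\<Sum>i=1..j. sH (a + i - r - 1 - j) / (a + i - r - 1 - j) ^ 2)
          + 2 * sHm 3 (a - r - 1) + sH (a - r - 1 - j) * zeta2
          + 2 * sH (a - r - 1) * sHm 2 (a - r - 1)
          - 2 * sHm 3 (a - r - 1 - j) - sH (a - r - 1) * zeta2
          - 2 * sH (a - r - 1 - j) * sHm 2 (a - r - 1 - j))))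
    \<and> (\<lambda>n. sH (real (Suc n) + a) ^ 2 / real ((Suc n + k + r) choose k)) sums
      (real k * (\<Sum>j=1..k-1. (-1) ^ (j+1) * real ((k-1) choose j) *
        ( sH (a - r - 1) ^ 3 + sH (a - r - 1) * sHm 2 (a - r - 1) + sH (a - r - 1) * zeta2
          - sH (a - r - 1 - j) ^ 3 - sH (a - r - 1 - j) * sHm 2 (a - r - 1 - j) - sH (a - r - 1 - j) * zeta2
          + (real (r + 1) - a) * (\<Sum>i=1..r+1. sH (a + i - r - 1) ^ 2 / (real i * (a + i - r - 1)))
          + (\<Sum>i=1..j. sH (a + i - r - 1 - j) / (a + i - r - 1 - j) ^ 2)
          - (real (r + 1 + j) - a) * (\<Sum>i=1..r+1+j. sH (a + i - r - 1 - j) ^ 2 / (real i * (a + i - r - 1 - j))))))"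
proof -
  have k: "k \<ge> 2" using assms(1) .
  have h: "a - real r - 1 - real j \<ge> 0" if "j \<in> {1..k-1}" for j
    using that assms(2) by auto
  show ?thesis
  proof (intro conjI)
    show "(\<lambda>n. sH (real (Suc n) + a) / real ((Suc n + k + r) choose k)) sums
      (real k * (\<Sum>j=1..k-1. (-1) ^ (j+1) * real ((k-1) choose j) *
        ( sH (a - r - 1) ^ 2 + sHm 2 (a - r - 1)
          - sH (a - r - 1 - j) ^ 2 - sHm 2 (a - r - 1 - j)
          - (real (r + 1 + j) - a) * (\<Sum>i=1..r+1+j. sH (a + i - r - 1 - j) / (real i * (a + i - r - 1 - j)))
          + (real (r + 1) - a) * (\<Sum>i=1..r+1. sH (a + i - r - 1) / (real i * (a + i - r - 1))))))"
    proof (rule assemble[OF k, where f = sH])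
      fix j :: nat assume j: "j \<in> {1..k-1}"
      from per_j[OF sH_bnd h[OF j]] show "(\<lambda>n. sH (real (Suc n) + a) *
        (1 / (real (Suc n) + real r + 1) - 1 / (real (Suc n) + real r + 1 + real j))) sums
        ( sH (a - r - 1) ^ 2 + sHm 2 (a - r - 1)
          - sH (a - r - 1 - j) ^ 2 - sHm 2 (a - r - 1 - j)
          - (real (r + 1 + j) - a) * (\<Sum>i=1..r+1+j. sH (a + i - r - 1 - j) / (real i * (a + i - r - 1 - j)))
          + (real (r + 1) - a) * (\<Sum>i=1..r+1. sH (a + i - r - 1) / (real i * (a + i - r - 1))))"
        unfolding brace1[OF h[OF j]] .
    qed
    show "(\<lambda>n. sHm 2 (real (Suc n) + a) / real ((Suc n + k + r) choose k)) sums
      (real k * (\<Sum>j=1..k-1. (-1) ^ (j+1) * real ((k-1) choose j) *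
        ( (real (r + 1) - a) * (\<Sum>i=1..r+1. sHm 2 (a + i - r - 1) / (real i * (a + i - r - 1)))
          - (real (r + 1 + j) - a) * (\<Sum>i=1..r+1+j. sHm 2 (a + i - r - 1 - j) / (real i * (a + i - r - 1 - j)))
          - (\<Sum>i=1..j. sH (a + i - r - 1 - j) / (a + i - r - 1 - j) ^ 2)
          + 2 * sHm 3 (a - r - 1) + sH (a - r - 1 - j) * zeta2
          + 2 * sH (a - r - 1) * sHm 2 (a - r - 1)
          - 2 * sHm 3 (a - r - 1 - j) - sH (a - r - 1) * zeta2
          - 2 * sH (a - r - 1 - j) * sHm 2 (a - r - 1 - j))))"
    proof (rule assemble[OF k, where f = "sHm 2"])
      fix j :: nat assume j: "j \<in> {1..k-1}"
      from per_j[OF sHm2_bound h[OF j]] show "(\<lambda>n. sHm 2 (real (Suc n) + a) *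
        (1 / (real (Suc n) + real r + 1) - 1 / (real (Suc n) + real r + 1 + real j))) sums
        ( (real (r + 1) - a) * (\<Sum>i=1..r+1. sHm 2 (a + i - r - 1) / (real i * (a + i - r - 1)))
          - (real (r + 1 + j) - a) * (\<Sum>i=1..r+1+j. sHm 2 (a + i - r - 1 - j) / (real i * (a + i - r - 1 - j)))
          - (\<Sum>i=1..j. sH (a + i - r - 1 - j) / (a + i - r - 1 - j) ^ 2)
          + 2 * sHm 3 (a - r - 1) + sH (a - r - 1 - j) * zeta2
          + 2 * sH (a - r - 1) * sHm 2 (a - r - 1)
          - 2 * sHm 3 (a - r - 1 - j) - sH (a - r - 1) * zeta2
          - 2 * sH (a - r - 1 - j) * sHm 2 (a - r - 1 - j))"
        unfolding brace2[OF h[OF j]] .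
    qed
    show "(\<lambda>n. sH (real (Suc n) + a) ^ 2 / real ((Suc n + k + r) choose k)) sums
      (real k * (\<Sum>j=1..k-1. (-1) ^ (j+1) * real ((k-1) choose j) *
        ( sH (a - r - 1) ^ 3 + sH (a - r - 1) * sHm 2 (a - r - 1) + sH (a - r - 1) * zeta2
          - sH (a - r - 1 - j) ^ 3 - sH (a - r - 1 - j) * sHm 2 (a - r - 1 - j) - sH (a - r - 1 - j) * zeta2
          + (real (r + 1) - a) * (\<Sum>i=1..r+1. sH (a + i - r - 1) ^ 2 / (real i * (a + i - r - 1)))
          + (\<Sum>i=1..j. sH (a + i - r - 1 - j) / (a + i - r - 1 - j) ^ 2)
          - (real (r + 1 + j) - a) * (\<Sum>i=1..r+1+j. sH (a + i - r - 1 - j) ^ 2 / (real i * (a + i - r - 1 - j))))))"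
    proof (rule assemble[OF k, where f = "\<lambda>y. sH y ^ 2"])
      fix j :: nat assume j: "j \<in> {1..k-1}"
      from per_j[OF sHsq_bnd h[OF j]] show "(\<lambda>n. sH (real (Suc n) + a) ^ 2 *
        (1 / (real (Suc n) + real r + 1) - 1 / (real (Suc n) + real r + 1 + real j))) sums
        ( sH (a - r - 1) ^ 3 + sH (a - r - 1) * sHm 2 (a - r - 1) + sH (a - r - 1) * zeta2
          - sH (a - r - 1 - j) ^ 3 - sH (a - r - 1 - j) * sHm 2 (a - r - 1 - j) - sH (a - r - 1 - j) * zeta2
          + (real (r + 1) - a) * (\<Sum>i=1..r+1. sH (a + i - r - 1) ^ 2 / (real i * (a + i - r - 1)))
          + (\<Sum>i=1..j. sH (a + i - r - 1 - j) / (a + i - r - 1 - j) ^ 2)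
          - (real (r + 1 + j) - a) * (\<Sum>i=1..r+1+j. sH (a + i - r - 1 - j) ^ 2 / (real i * (a + i - r - 1 - j))))"
        unfolding brace3[OF h[OF j]] by simp
    qed
  qed
qed

end
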